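(* Almost surely the following holds simultaneously for all $h_0,h_1\in\mathbb R$: if $h_0,h_1\ge0$ then $h_*\le h'$ pointwise on $\{0,\dots,L\}$ for every minimizer $h'$ of $E$ among functions $h:\{0,\dots,L\}\to\mathbb R$ with $h(0)=h_0$, $h(L)=h_1$; and if $h_0,h_1\le0$ then $h_*\ge h'$ pointwise for every such minimizer $h'$. (The exceptional null set does not depend on $(h_0,h_1)$.)
   Context: Let $L\ge2$ be a power of $2$. For $h:\{0,\dots,L\}\to\mathbb R$ set $D(h)=\frac12\sum_{x=1}^L(h(x)-h(x-1))^2$, $W(h)=\sum_{x=1}^{L-1}W(x,h(x))$ where $\{W(x,\cdot)\}_{x=1}^{L-1}$ are independent two-sided standard Brownian motions (with $W(x,0)=0$), and $E(h)=D(h)-W(h)$. $h_*$ denotes the almost surely unique minimizer of $E$ among $h$ with $h(0)=h(L)=0$. *)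

theory Defs
  imports "HOL-Probability.Probability"
begin

definition Dir :: "nat \<Rightarrow> (nat \<Rightarrow> real) \<Rightarrow> real" where
  "Dir L h = (1/2) * (\<Sum>x = 1..L. (h x - h (x - 1))^2)"

definition Wpot :: "nat \<Rightarrow> (nat \<Rightarrow> real \<Rightarrow> 'a \<Rightarrow> real) \<Rightarrow> 'a \<Rightarrow> (nat \<Rightarrow> real) \<Rightarrow> real" where
  "Wpot L W w h = (\<Sum>x = 1..L - 1. W x (h x) w)"

definition Energy :: "nat \<Rightarrow> (nat \<Rightarrow> real \<Rightarrow> 'a \<Rightarrow> real) \<Rightarrow> 'a \<Rightarrow> (nat \<Rightarrow> real) \<Rightarrow> real" where
  "Energy L W w h = Dir L h - Wpot L W w h"

text \<open>h is a minimizer of E (at sample point w) among h with h(0)=a, h(L)=b.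
  Only the values of h on {0..L} matter.\<close>
definition is_minimizer ::
  "nat \<Rightarrow> (nat \<Rightarrow> real \<Rightarrow> 'a \<Rightarrow> real) \<Rightarrow> 'a \<Rightarrow> real \<Rightarrow> real \<Rightarrow> (nat \<Rightarrow> real) \<Rightarrow> bool" where
  "is_minimizer L W w a b h \<longleftrightarrow>
     h 0 = a \<and> h L = b \<and>
     (\<forall>g. g 0 = a \<longrightarrow> g L = b \<longrightarrow> Energy L W w h \<le> Energy L W w g)"

definition indep_two_sided_BMs ::
  "'a measure \<Rightarrow> nat \<Rightarrow> (nat \<Rightarrow> real \<Rightarrow> 'a \<Rightarrow> real) \<Rightarrow> bool" where
  "indep_two_sided_BMs M L W \<longleftrightarrow>
     (AE w in M. \<forall>x\<in>{1..L - 1}. W x 0 w = 0 \<and> continuous_on UNIV (\<lambda>t. W x t w)) \<and>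
     (\<forall>(n::nat) (ts::nat \<Rightarrow> real). strict_mono ts \<longrightarrow>
        prob_space.indep_vars M (\<lambda>_. borel)
          (\<lambda>(x, i) w. W x (ts (Suc i)) w - W x (ts i) w) ({1..L - 1} \<times> {..<n}) \<and>
        (\<forall>x\<in>{1..L - 1}. \<forall>i<n.
           distributed M lborel (\<lambda>w. W x (ts (Suc i)) w - W x (ts i) w)
             (normal_density 0 (sqrt (ts (Suc i) - ts i)))))"

end

theory Submission
  imports Defs
begin

lemma sq_minmax:
  fixes a b c d :: real
  shows "(min a b - min c d)^2 + (max a b - max c d)^2 \<le> (a - c)^2 + (b - d)^2"
proof (cases "a \<le> b"; cases "c \<le> d")
  assume "a \<le> b" "\<not> c \<le> d"
  then have "0 \<le> (b - a) * (c - d)" by (intro mult_nonneg_nonneg) auto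
  with \<open>a \<le> b\<close> \<open>\<not> c \<le> d\<close> show ?thesis by (simp add: min_def max_def power2_eq_square algebra_simps)
next
  assume "\<not> a \<le> b" "c \<le> d"
  then have "0 \<le> (a - b) * (d - c)" by (intro mult_nonneg_nonneg) auto
  with \<open>\<not> a \<le> b\<close> \<open>c \<le> d\<close> show ?thesis by (simp add: min_def max_def power2_eq_square algebra_simps)
qed (auto simp: min_def max_def)

lemma energy_minmax:
  "Energy L W w (\<lambda>y. min (f y) (g y)) + Energy L W w (\<lambda>y. max (f y) (g y))
     \<le> Energy L W w f + Energy L W w g"
proof -
  have D: "Dir L (\<lambda>y. min (f y) (g y)) + Dir L (\<lambda>y. max (f y) (g y)) \<le> Dir L f + Dir L g"
  proof -
    have "(\<Sum>x = 1..L. (min (f x) (g x) - min (f (x - 1)) (g (x - 1)))^2) + (\<Sum>x = 1..L. (max (f x) (g x) - max (f (x - 1)) (g (x - 1)))^2)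
       \<le> (\<Sum>x = 1..L. (f x - f (x - 1))^2) + (\<Sum>x = 1..L. (g x - g (x - 1))^2)"
      unfolding sum.distrib[symmetric] by (intro sum_mono sq_minmax)
    then show ?thesis unfolding Dir_def by simp
  qed
  have "W y (min a b) w + W y (max a b) w = W y a w + W y b w" for y a b
    by (cases "a \<le> b") (auto simp: min_def max_def)
  then have P: "Wpot L W w (\<lambda>y. min (f y) (g y)) + Wpot L W w (\<lambda>y. max (f y) (g y)) = Wpot L W w f + Wpot L W w g"
    unfolding Wpot_def by (simp add: sum.distrib[symmetric])
  show ?thesis using D P unfolding Energy_def by linarith
qed

lemma det_main:
  assumes U: "\<forall>h g x. is_minimizer L W w 0 0 h \<longrightarrow> is_minimizer L W w 0 0 g \<longrightarrow>
                x \<in> {1..L-1} \<longrightarrow> h x \<le> g x"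
    and hs: "is_minimizer L W w 0 0 hstar" and hp: "is_minimizer L W w h0 h1 h'"
  shows "(h0 \<ge> 0 \<and> h1 \<ge> 0 \<longrightarrow> (\<forall>x\<le>L. hstar x \<le> h' x)) \<and>
              (h0 \<le> 0 \<and> h1 \<le> 0 \<longrightarrow> (\<forall>x\<le>L. hstar x \<ge> h' x))"
proof (intro conjI impI)
  let ?m = "\<lambda>y. min (hstar y) (h' y)" and ?M = "\<lambda>y. max (hstar y) (h' y)"
  have EE: "Energy L W w ?m + Energy L W w ?M \<le> Energy L W w hstar + Energy L W w h'"
    by (rule energy_minmax)
  assume that: "h0 \<ge> 0 \<and> h1 \<ge> 0"
  show "\<forall>x\<le>L. hstar x \<le> h' x"
  proof (intro allI impI)
    fix x assume x: "x \<le> L"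
    have mb: "?m 0 = 0" "?m L = 0" "?M 0 = h0" "?M L = h1"
      using hs hp that unfolding is_minimizer_def by auto
    have "Energy L W w h' \<le> Energy L W w ?M" using hp mb unfolding is_minimizer_def by auto
    then have "is_minimizer L W w 0 0 ?m"
      using hs EE mb unfolding is_minimizer_def by fastforce
    then have "x \<in> {1..L-1} \<Longrightarrow> hstar x \<le> ?m x" using U hs by blast
    moreover have "x = 0 \<or> x = L \<Longrightarrow> hstar x \<le> h' x" using hs hp that unfolding is_minimizer_def by auto
    ultimately show "hstar x \<le> h' x" using x by force
  qed
  next
  let ?m = "\<lambda>y. min (hstar y) (h' y)" and ?M = "\<lambda>y. max (hstar y) (h' y)"
  have EE: "Energy L W w ?m + Energy L W w ?M \<le> Energy L W w hstar + Energy L W w h'"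
    by (rule energy_minmax)
  assume that: "h0 \<le> 0 \<and> h1 \<le> 0"
  show "\<forall>x\<le>L. hstar x \<ge> h' x"
  proof (intro allI impI)
    fix x assume x: "x \<le> L"
    have mb: "?M 0 = 0" "?M L = 0" "?m 0 = h0" "?m L = h1"
      using hs hp that unfolding is_minimizer_def by auto
    have "Energy L W w h' \<le> Energy L W w ?m" using hp mb unfolding is_minimizer_def by auto
    then have "is_minimizer L W w 0 0 ?M"
      using hs EE mb unfolding is_minimizer_def by fastforce
    then have "x \<in> {1..L-1} \<Longrightarrow> ?M x \<le> hstar x" using U hs by blast
    moreover have "x = 0 \<or> x = L \<Longrightarrow> hstar x \<ge> h' x" using hs hp that unfolding is_minimizer_def by auto
    ultimately show "hstar x \<ge> h' x" using x by force
  qed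
qed

lemma main_from_U:
  assumes U: "AE w in M. \<forall>h g x. is_minimizer L W w 0 0 h \<longrightarrow> is_minimizer L W w 0 0 g \<longrightarrow>
                x \<in> {1..L-1} \<longrightarrow> h x \<le> g x"
  shows "AE w in M. \<forall>(h0::real) (h1::real) hstar h'.
           is_minimizer L W w 0 0 hstar \<longrightarrow> is_minimizer L W w h0 h1 h' \<longrightarrow>
             ((h0 \<ge> 0 \<and> h1 \<ge> 0 \<longrightarrow> (\<forall>x\<le>L. hstar x \<le> h' x)) \<and>
              (h0 \<le> 0 \<and> h1 \<le> 0 \<longrightarrow> (\<forall>x\<le>L. hstar x \<ge> h' x)))"
proof (rule AE_mp[OF U], rule AE_I2, intro impI allI)
  fix w h0 h1 hstar h'
  assume "\<forall>h g x. is_minimizer L W w 0 0 h \<longrightarrow> is_minimizer L W w 0 0 g \<longrightarrow>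
                x \<in> {1..L-1} \<longrightarrow> h x \<le> g x" "is_minimizer L W w 0 0 hstar" "is_minimizer L W w h0 h1 h'"
  then show "(h0 \<ge> 0 \<and> h1 \<ge> 0 \<longrightarrow> (\<forall>x\<le>L. hstar x \<le> h' x)) \<and>
              (h0 \<le> 0 \<and> h1 \<le> 0 \<longrightarrow> (\<forall>x\<le>L. hstar x \<ge> h' x))" by (rule det_main)
qed

definition hq :: "nat \<Rightarrow> (nat \<Rightarrow> rat) \<Rightarrow> nat \<Rightarrow> real" where
  "hq L f = (\<lambda>y. if y \<in> {1..L-1} then real_of_rat (f y) else 0)"
definition QQ :: "nat \<Rightarrow> (nat \<Rightarrow> rat) set" where
  "QQ L = PiE {1..L-1} (\<lambda>_. UNIV)"
definition E1 :: "nat \<Rightarrow> nat \<Rightarrow> rat \<Rightarrow> (nat \<times> rat \<times> rat \<Rightarrow> real) \<Rightarrow> (nat \<Rightarrow> rat) \<Rightarrow> real" where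
  "E1 L x b v f = Dir L (hq L f) - (\<Sum>y\<in>{1..L-1}-{x}. v (y, 0, f y)) - v (x, b, f x)"
definition J1 :: "nat \<Rightarrow> nat \<Rightarrow> rat \<Rightarrow> (nat \<times> rat \<times> rat \<Rightarrow> real) \<Rightarrow> ereal" where
  "J1 L x b v = (INF f\<in>{f\<in>QQ L. f x \<le> b}. ereal (E1 L x b v f))"
definition J2 :: "nat \<Rightarrow> nat \<Rightarrow> rat \<Rightarrow> (nat \<times> rat \<times> rat \<Rightarrow> real) \<Rightarrow> ereal" where
  "J2 L x c v = (INF f\<in>{f\<in>QQ L. c \<le> f x}. ereal (E1 L x c v f))"
definition GG :: "nat \<Rightarrow> nat \<Rightarrow> rat \<Rightarrow> rat \<Rightarrow> (nat \<times> rat \<times> rat \<Rightarrow> real) \<Rightarrow> real" where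
  "GG L x b c v = real_of_ereal (J2 L x c v) - real_of_ereal (J1 L x b v)"
definition KK :: "nat \<Rightarrow> nat \<Rightarrow> rat \<Rightarrow> rat \<Rightarrow> (nat \<times> rat \<times> rat) set" where
  "KK L x b c = {k. fst k \<in> {1..L-1} \<and> (fst k \<noteq> x \<or> (fst (snd k) \<le> b \<and> snd (snd k) \<le> b)
                 \<or> (c \<le> fst (snd k) \<and> c \<le> snd (snd k)))}"
definition incr :: "(nat \<Rightarrow> real \<Rightarrow> 'a \<Rightarrow> real) \<Rightarrow> nat \<times> rat \<times> rat \<Rightarrow> 'a \<Rightarrow> real" where
  "incr W k w = W (fst k) (real_of_rat (snd (snd k))) w - W (fst k) (real_of_rat (fst (snd k))) w"
definition VV :: "nat \<Rightarrow> (nat \<Rightarrow> real \<Rightarrow> 'a \<Rightarrow> real) \<Rightarrow> nat \<Rightarrow> rat \<Rightarrow> rat \<Rightarrow> 'a \<Rightarrow> nat \<times> rat \<times> rat \<Rightarrow> real" where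
  "VV L W x b c w = (\<lambda>k\<in>KK L x b c. incr W k w)"
definition ZZ :: "(nat \<Rightarrow> real \<Rightarrow> 'a \<Rightarrow> real) \<Rightarrow> nat \<Rightarrow> rat \<Rightarrow> rat \<Rightarrow> 'a \<Rightarrow> real" where
  "ZZ W x b c w = W x (real_of_rat c) w - W x (real_of_rat b) w"

lemma E1_eq:
  assumes W0: "\<forall>y\<in>{1..L-1}. W y 0 w = 0" and x: "x \<in> {1..L-1}"
    and a: "(x, a, f x) \<in> KK L x b c"
  shows "E1 L x a (VV L W x b c w) f = Energy L W w (hq L f) + W x (real_of_rat a) w"
proof -
  have V1: "VV L W x b c w (y, 0, f y) = W y (real_of_rat (f y)) w" if "y \<in> {1..L-1}-{x}" for y
    using that W0 by (auto simp: VV_def KK_def incr_def)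
  have V2: "VV L W x b c w (x, a, f x) = W x (real_of_rat (f x)) w - W x (real_of_rat a) w"
    using a by (simp add: VV_def incr_def)
  have S: "(\<Sum>y\<in>{1..L-1}. W y (hq L f y) w) = W x (real_of_rat (f x)) w + (\<Sum>y\<in>{1..L-1}-{x}. W y (real_of_rat (f y)) w)"
    using x by (simp add: sum.remove hq_def)
  show ?thesis
    unfolding E1_def Energy_def Wpot_def using S V2 by (simp add: V1)
qed

definition la :: "real \<Rightarrow> nat \<Rightarrow> rat" where
  "la r n = of_int \<lfloor>r * real (Suc n)\<rfloor> / of_nat (Suc n)"
definition ua :: "real \<Rightarrow> nat \<Rightarrow> rat" where
  "ua r n = of_int \<lceil>r * real (Suc n)\<rceil> / of_nat (Suc n)"

lemma la_real: "real_of_rat (la r n) = of_int \<lfloor>r * real (Suc n)\<rfloor> / real (Suc n)"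
  unfolding la_def of_rat_divide of_rat_of_int_eq of_rat_of_nat_eq ..
lemma ua_real: "real_of_rat (ua r n) = of_int \<lceil>r * real (Suc n)\<rceil> / real (Suc n)"
  unfolding ua_def of_rat_divide of_rat_of_int_eq of_rat_of_nat_eq ..

lemma la_le: "real_of_rat (la r n) \<le> r"
proof -
  have "of_int \<lfloor>r * real (Suc n)\<rfloor> \<le> r * real (Suc n)" by simp
  then show ?thesis unfolding la_real by (simp add: divide_le_eq)
qed
lemma la_ge: "real_of_rat (la r n) \<ge> r - 1 / real (Suc n)"
proof -
  have "r * real (Suc n) - 1 \<le> of_int \<lfloor>r * real (Suc n)\<rfloor>" by linarith
  then have "(r * real (Suc n) - 1) / real (Suc n) \<le> of_int \<lfloor>r * real (Suc n)\<rfloor> / real (Suc n)"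
    by (intro divide_right_mono) auto
  moreover have "(r * real (Suc n) - 1) / real (Suc n) = r - 1 / real (Suc n)"
    by (simp add: field_simps del: of_nat_Suc)
  ultimately show ?thesis unfolding la_real by simp
qed
lemma ua_ge: "real_of_rat (ua r n) \<ge> r"
proof -
  have "of_int \<lceil>r * real (Suc n)\<rceil> \<ge> r * real (Suc n)" by simp
  then show ?thesis unfolding ua_real by (simp add: le_divide_eq)
qed
lemma ua_le: "real_of_rat (ua r n) \<le> r + 1 / real (Suc n)"
proof -
  have "of_int \<lceil>r * real (Suc n)\<rceil> \<le> r * real (Suc n) + 1" by linarith
  then have "of_int \<lceil>r * real (Suc n)\<rceil> / real (Suc n) \<le> (r * real (Suc n) + 1) / real (Suc n)"
    by (intro divide_right_mono) auto
  moreover have "(r * real (Suc n) + 1) / real (Suc n) = r + 1 / real (Suc n)"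
    by (simp add: field_simps del: of_nat_Suc)
  ultimately show ?thesis unfolding ua_real by simp
qed

lemma inv_Suc_lim: "(\<lambda>n. 1 / real (Suc n)) \<longlonglongrightarrow> 0"
  using LIMSEQ_inverse_real_of_nat by (simp add: inverse_eq_divide)

lemma la_lim: "(\<lambda>n. real_of_rat (la r n)) \<longlonglongrightarrow> r"
proof (rule tendsto_sandwich[of "\<lambda>n. r - 1 / real (Suc n)" _ _ "\<lambda>n. r"])
  show "\<forall>\<^sub>F n in sequentially. r - 1 / real (Suc n) \<le> real_of_rat (la r n)" using la_ge by simp
  show "\<forall>\<^sub>F n in sequentially. real_of_rat (la r n) \<le> r" using la_le by simp
  show "(\<lambda>n. r - 1 / real (Suc n)) \<longlonglongrightarrow> r" using tendsto_diff[OF tendsto_const inv_Suc_lim, of r] by simp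
qed simp
lemma ua_lim: "(\<lambda>n. real_of_rat (ua r n)) \<longlonglongrightarrow> r"
proof (rule tendsto_sandwich[of "\<lambda>n. r" _ _ "\<lambda>n. r + 1 / real (Suc n)"])
  show "\<forall>\<^sub>F n in sequentially. r \<le> real_of_rat (ua r n)" using ua_ge by simp
  show "\<forall>\<^sub>F n in sequentially. real_of_rat (ua r n) \<le> r + 1 / real (Suc n)" using ua_le by simp
  show "(\<lambda>n. r + 1 / real (Suc n)) \<longlonglongrightarrow> r" using tendsto_add[OF tendsto_const inv_Suc_lim, of r] by simp
qed simp

lemma energy_lim:
  assumes cont: "\<forall>y\<in>{1..L-1}. continuous_on UNIV (\<lambda>t. W y t w)"
    and lim: "\<And>y. y \<le> L \<Longrightarrow> (\<lambda>n. F n y) \<longlonglongrightarrow> h y"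
  shows "(\<lambda>n. Energy L W w (F n)) \<longlonglongrightarrow> Energy L W w h"
proof -
  have "(\<lambda>n. Dir L (F n)) \<longlonglongrightarrow> Dir L h"
    unfolding Dir_def by (intro tendsto_intros lim) auto
  moreover have "(\<lambda>n. Wpot L W w (F n)) \<longlonglongrightarrow> Wpot L W w h"
    unfolding Wpot_def
  proof (intro tendsto_sum)
    fix y assume y: "y \<in> {1..L-1}"
    then have "continuous_on UNIV (\<lambda>t. W y t w)" using cont by blast
    then have "isCont (\<lambda>t. W y t w) (h y)"
      using continuous_on_eq_continuous_at[of UNIV] by blast
    then show "(\<lambda>n. W y (F n y) w) \<longlonglongrightarrow> W y (h y) w"
    proof (rule isCont_tendsto_compose[where g="\<lambda>t. W y t w"])
      show "(\<lambda>n. F n y) \<longlonglongrightarrow> h y" using lim y by auto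
    qed
  qed
  ultimately show ?thesis unfolding Energy_def by (intro tendsto_intros)
qed

lemma hq_boundary: "hq L f 0 = 0" "hq L f L = 0"
  unfolding hq_def by auto

lemma INF_slab:
  assumes cont: "\<forall>y\<in>{1..L-1}. continuous_on UNIV (\<lambda>t. W y t w)"
    and hmin: "is_minimizer L W w 0 0 h"
    and seq: "\<And>n. fs n \<in> S" and conv: "\<And>y. y \<in> {1..L-1} \<Longrightarrow> (\<lambda>n. real_of_rat (fs n y)) \<longlonglongrightarrow> h y"
  shows "(INF f\<in>S. ereal (Energy L W w (hq L f) + a)) = ereal (Energy L W w h + a)"
proof (rule antisym)
  show "ereal (Energy L W w h + a) \<le> (INF f\<in>S. ereal (Energy L W w (hq L f) + a))"
  proof (rule INF_greatest)
    fix f assume "f \<in> S"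
    have "Energy L W w h \<le> Energy L W w (hq L f)"
      using hmin hq_boundary[of L f] unfolding is_minimizer_def by blast
    then show "ereal (Energy L W w h + a) \<le> ereal (Energy L W w (hq L f) + a)" by simp
  qed
  have lim: "(\<lambda>n. Energy L W w (hq L (fs n))) \<longlonglongrightarrow> Energy L W w h"
  proof (rule energy_lim[where W=W and w=w and L=L, OF cont])
    fix y assume y: "y \<le> L"
    show "(\<lambda>n. hq L (fs n) y) \<longlonglongrightarrow> h y"
    proof (cases "y \<in> {1..L-1}")
      case True then show ?thesis using conv[OF True] by (simp add: hq_def)
    next
      case False
      then have "y = 0 \<or> y = L" using y by auto
      then have "h y = 0" using hmin unfolding is_minimizer_def by auto
      have "hq L (fs n) y = 0" for n using False unfolding hq_def by auto
      then show ?thesis using \<open>h y = 0\<close> by simp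
    qed
  qed
  then have lim2: "(\<lambda>n. ereal (Energy L W w (hq L (fs n)) + a)) \<longlonglongrightarrow> ereal (Energy L W w h + a)"
    by (intro tendsto_intros)
  show "(INF f\<in>S. ereal (Energy L W w (hq L f) + a)) \<le> ereal (Energy L W w h + a)"
    by (rule LIMSEQ_le_const[OF lim2]) (auto intro!: INF_lower seq)
qed

lemma det_core:
  assumes W0: "\<forall>y\<in>{1..L-1}. W y 0 w = 0" and cont: "\<forall>y\<in>{1..L-1}. continuous_on UNIV (\<lambda>t. W y t w)"
    and x: "x \<in> {1..L-1}"
    and hmin: "is_minimizer L W w 0 0 h" and gmin: "is_minimizer L W w 0 0 g"
    and hb: "h x \<le> real_of_rat b" and gc: "real_of_rat c \<le> g x"
  shows "ZZ W x b c w = GG L x b c (VV L W x b c w)"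
proof -
  let ?S1 = "{f\<in>QQ L. f x \<le> b}" and ?S2 = "{f\<in>QQ L. c \<le> f x}"
  have J1: "J1 L x b (VV L W x b c w) = (INF f\<in>?S1. ereal (Energy L W w (hq L f) + W x (real_of_rat b) w))"
    unfolding J1_def
    by (intro INF_cong refl arg_cong[where f=ereal] E1_eq W0 x) (use x in \<open>auto simp: KK_def\<close>)
  have J2: "J2 L x c (VV L W x b c w) = (INF f\<in>?S2. ereal (Energy L W w (hq L f) + W x (real_of_rat c) w))"
    unfolding J2_def
    by (intro INF_cong refl arg_cong[where f=ereal] E1_eq W0 x) (use x in \<open>auto simp: KK_def\<close>)
  have J1': "J1 L x b (VV L W x b c w) = ereal (Energy L W w h + W x (real_of_rat b) w)"
    unfolding J1
  proof (rule INF_slab[OF cont hmin])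
    fix n show "restrict (\<lambda>y. la (h y) n) {1..L-1} \<in> ?S1"
    proof -
      have "real_of_rat (la (h x) n) \<le> real_of_rat b" using la_le[of "h x" n] hb by linarith
      then have "la (h x) n \<le> b" by (simp add: of_rat_less_eq)
      then show ?thesis using x by (auto simp: QQ_def)
    qed
  next
    fix y assume "y \<in> {1..L-1}"
    then show "(\<lambda>n. real_of_rat (restrict (\<lambda>y. la (h y) n) {1..L-1} y)) \<longlonglongrightarrow> h y"
      using la_lim by simp
  qed
  have J2': "J2 L x c (VV L W x b c w) = ereal (Energy L W w g + W x (real_of_rat c) w)"
    unfolding J2
  proof (rule INF_slab[OF cont gmin])
    fix n show "restrict (\<lambda>y. ua (g y) n) {1..L-1} \<in> ?S2"
    proof -
      have "real_of_rat c \<le> real_of_rat (ua (g x) n)" using ua_ge[of "g x" n] gc by linarith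
      then have "c \<le> ua (g x) n" by (simp add: of_rat_less_eq)
      then show ?thesis using x by (auto simp: QQ_def)
    qed
  next
    fix y assume "y \<in> {1..L-1}"
    then show "(\<lambda>n. real_of_rat (restrict (\<lambda>y. ua (g y) n) {1..L-1} y)) \<longlonglongrightarrow> g y"
      using ua_lim by simp
  qed
  have "Energy L W w h = Energy L W w g"
    using hmin gmin unfolding is_minimizer_def by (meson antisym)
  then show ?thesis unfolding GG_def ZZ_def J1' J2' by simp
qed

lemma grid_exists:
  fixes T :: "real set" assumes fin: "finite T"
  shows "\<exists>(ts::nat\<Rightarrow>real) N. strict_mono ts \<and> T \<subseteq> ts ` {..<N}"
proof -
  obtain xs where xs: "sorted_wrt (<) xs" "set xs = T"
    using finite_set_strict_sorted[OF fin] by blast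
  define B where "B = Max (insert 0 (abs ` T)) + 1"
  have Bge: "t < B" if "t \<in> T" for t
  proof -
    have "\<bar>t\<bar> \<le> Max (insert 0 (abs ` T))" using fin that by (intro Max_ge) auto
    then show ?thesis unfolding B_def by linarith
  qed
  have B0: "0 < B" unfolding B_def using fin by (smt (verit) Max_ge finite_imageI finite_insert insertI1)
  define ts where "ts i = (if i < length xs then xs ! i else B + real i)" for i
  have "strict_mono ts" unfolding strict_mono_Suc_iff
  proof
    fix i
    show "ts i < ts (Suc i)"
    proof (cases "Suc i < length xs")
      case True then show ?thesis using sorted_wrt_nth_less[OF xs(1), of i "Suc i"] by (simp add: ts_def)
    next
      case False
      show ?thesis
      proof (cases "i < length xs")
        case True
        then have "xs ! i \<in> T" using xs(2) by auto
        then have "xs ! i < B" by (rule Bge)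
        then show ?thesis using True False by (simp add: ts_def)
      next
        case False then show ?thesis by (simp add: ts_def)
      qed
    qed
  qed
  moreover have "T \<subseteq> ts ` {..<length xs}"
  proof
    fix t assume "t \<in> T"
    then obtain i where "i < length xs" "xs ! i = t" using xs(2) by (auto simp: in_set_conv_nth)
    then show "t \<in> ts ` {..<length xs}" by (force simp: ts_def)
  qed
  ultimately show ?thesis by (intro exI[of _ ts] exI[of _ "length xs"] conjI)
qed

lemma tele:
  fixes f :: "nat \<Rightarrow> real"
  shows "(\<Sum>i\<in>{p..<q}. f (Suc i) - f i) - (\<Sum>i\<in>{q..<p}. f (Suc i) - f i) = f q - f p"
proof (cases "p \<le> q")
  case True then show ?thesis by (simp add: sum_Suc_diff')
next
  case False then show ?thesis by (simp add: sum_Suc_diff')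
qed

context prob_space begin

lemma dist_incr:
  assumes BM: "indep_two_sided_BMs M L W" and y: "y \<in> {1..L-1}" and st: "s < t"
  shows "\<exists>f. distributed M lborel (\<lambda>w. W y t w - W y s w) f"
proof -
  define ts where "ts i = s + real i * (t - s)" for i
  have "strict_mono ts" unfolding strict_mono_Suc_iff ts_def using st by (simp add: algebra_simps)
  then have "\<forall>x\<in>{1..L - 1}. \<forall>i<1.
           distributed M lborel (\<lambda>w. W x (ts (Suc i)) w - W x (ts i) w)
             (normal_density 0 (sqrt (ts (Suc i) - ts i)))"
    using BM unfolding indep_two_sided_BMs_def by blast
  then have "distributed M lborel (\<lambda>w. W y (ts (Suc 0)) w - W y (ts 0) w)
             (normal_density 0 (sqrt (ts (Suc 0) - ts 0)))" using y by blast
  moreover have "ts (Suc 0) = t" "ts 0 = s" by (simp_all add: ts_def)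
  ultimately show ?thesis by auto
qed

lemma incr_meas:
  assumes BM: "indep_two_sided_BMs M L W" and y: "y \<in> {1..L-1}"
  shows "(\<lambda>w. W y t w - W y s w) \<in> borel_measurable M"
proof (cases s t rule: linorder_cases)
  case less
  then obtain f where "distributed M lborel (\<lambda>w. W y t w - W y s w) f" using dist_incr[OF BM y] by blast
  then show ?thesis by (simp add: distributed_def)
next
  case equal then show ?thesis by simp
next
  case greater
  then obtain f where "distributed M lborel (\<lambda>w. W y s w - W y t w) f" using dist_incr[OF BM y] by blast
  then have "(\<lambda>w. W y s w - W y t w) \<in> borel_measurable M" by (simp add: distributed_def)
  then have "(\<lambda>w. - (W y s w - W y t w)) \<in> borel_measurable M" by measurable
  then show ?thesis by simp
qed


lemma prod_from_indep:
  assumes ind: "indep_var Ma A Mb B" and f: "f \<in> measurable Ma N1" and g: "g \<in> measurable Mb N2"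
  shows "\<forall>Y\<in>sets N2. \<forall>X\<in>sets N1. prob ((f \<circ> A) -` X \<inter> space M \<inter> ((g \<circ> B) -` Y \<inter> space M))
           = prob ((f \<circ> A) -` X \<inter> space M) * prob ((g \<circ> B) -` Y \<inter> space M)"
proof (intro ballI)
  fix X Y assume X: "X \<in> sets N1" and Y: "Y \<in> sets N2"
  have A: "A \<in> measurable M Ma" using indep_var_rv1[OF ind] .
  have B: "B \<in> measurable M Mb" using indep_var_rv2[OF ind] .
  have sX: "f -` X \<inter> space Ma \<in> sets Ma" using f X by (rule measurable_sets)
  have sY: "g -` Y \<inter> space Mb \<in> sets Mb" using g Y by (rule measurable_sets)
  have e1: "(\<lambda>x. (A x, B x)) -` ((f -` X \<inter> space Ma) \<times> (g -` Y \<inter> space Mb)) \<inter> space M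
      = (f \<circ> A) -` X \<inter> space M \<inter> ((g \<circ> B) -` Y \<inter> space M)"
    using measurable_space[OF A] measurable_space[OF B] by auto
  have e2: "A -` (f -` X \<inter> space Ma) \<inter> space M = (f \<circ> A) -` X \<inter> space M"
    using measurable_space[OF A] by auto
  have e3: "B -` (g -` Y \<inter> space Mb) \<inter> space M = (g \<circ> B) -` Y \<inter> space M"
    using measurable_space[OF B] by auto
  show "prob ((f \<circ> A) -` X \<inter> space M \<inter> ((g \<circ> B) -` Y \<inter> space M))
           = prob ((f \<circ> A) -` X \<inter> space M) * prob ((g \<circ> B) -` Y \<inter> space M)"
    using indep_varD[OF ind sX sY] unfolding e1 e2 e3 .
qed

lemma FG:
  assumes BM: "indep_two_sided_BMs M L W" and x: "x \<in> {1..L-1}" and bc: "b < c"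
    and finJ: "finite J" and JK: "J \<subseteq> KK L x b c"
  shows "\<forall>A\<in>sets borel. \<forall>B\<in>sets (PiM J (\<lambda>_. borel)).
     prob ((\<lambda>w. \<lambda>k\<in>J. incr W k w) -` B \<inter> space M \<inter> (ZZ W x b c -` A \<inter> space M))
     = prob ((\<lambda>w. \<lambda>k\<in>J. incr W k w) -` B \<inter> space M) * prob (ZZ W x b c -` A \<inter> space M)"
proof -
  define sj where "sj j = real_of_rat (fst (snd j))" for j :: "nat \<times> rat \<times> rat"
  define tj where "tj j = real_of_rat (snd (snd j))" for j :: "nat \<times> rat \<times> rat"
  define T where "T = {real_of_rat b, real_of_rat c} \<union> (\<Union>j\<in>J. {sj j, tj j})"
  have "finite T" unfolding T_def using finJ by auto
  then obtain ts :: "nat \<Rightarrow> real" and N where ts: "strict_mono ts" and TN: "T \<subseteq> ts ` {..<N}"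
    using grid_exists by blast
  define idx where "idx r = inv_into {..<N} ts r" for r
  have idx: "idx r < N" "ts (idx r) = r" if "r \<in> T" for r
  proof -
    have "r \<in> ts ` {..<N}" using TN that by auto
    then show "idx r < N" "ts (idx r) = r" unfolding idx_def
      using inv_into_into[of r ts "{..<N}"] f_inv_into_f[of r ts "{..<N}"] by auto
  qed
  have bT: "real_of_rat b \<in> T" and cT: "real_of_rat c \<in> T" unfolding T_def by auto
  have sT: "sj j \<in> T" and tT: "tj j \<in> T" if "j \<in> J" for j using that unfolding T_def by auto
  have mono_idx: "idx r \<le> idx r' \<longleftrightarrow> r \<le> r'" if "r \<in> T" "r' \<in> T" for r r'
    using idx[OF that(1)] idx[OF that(2)] strict_mono_less_eq[OF ts, of "idx r" "idx r'"] by simp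
  define d where "d = (\<lambda>(x, i) w. W x (ts (Suc i)) w - W x (ts i) w)"
  define I where "I = {1..L - 1} \<times> {..<N}"
  have ind: "indep_vars (\<lambda>_. borel) d I"
    using BM ts unfolding indep_two_sided_BMs_def d_def I_def by blast
  define IZ where "IZ = {x} \<times> {idx (real_of_rat b)..<idx (real_of_rat c)}"
  define IV where "IV = I - IZ"
  have IZI: "IZ \<subseteq> I" unfolding IZ_def I_def using x idx[OF cT] by auto
  have indr: "indep_var (PiM IV (\<lambda>_. borel)) (\<lambda>\<omega>. restrict (\<lambda>i. d i \<omega>) IV)
                        (PiM IZ (\<lambda>_. borel)) (\<lambda>\<omega>. restrict (\<lambda>i. d i \<omega>) IZ)"
    by (rule indep_var_restrict[OF ind]) (auto simp: IV_def IZI)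
  define Phi where "Phi u = (\<lambda>j\<in>J. (\<Sum>i\<in>{idx (sj j)..<idx (tj j)}. u (fst j, i)) - (\<Sum>i\<in>{idx (tj j)..<idx (sj j)}. u (fst j, i)))"
    for u :: "nat \<times> nat \<Rightarrow> real"
  define Psi where "Psi u = (\<Sum>i\<in>{idx (real_of_rat b)..<idx (real_of_rat c)}. u (x, i))"
    for u :: "nat \<times> nat \<Rightarrow> real"
  have memV: "(fst j, i) \<in> IV"
    if j: "j \<in> J" and i: "i \<in> {idx (sj j)..<idx (tj j)} \<union> {idx (tj j)..<idx (sj j)}" for j i
  proof -
    have jK: "j \<in> KK L x b c" using j JK by auto
    have iN: "i < N" using i idx[OF sT[OF j]] idx[OF tT[OF j]] by auto
    have y: "fst j \<in> {1..L-1}" using jK by (simp add: KK_def)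
    have "(fst j, i) \<notin> IZ"
    proof
      assume Z: "(fst j, i) \<in> IZ"
      then have fx: "fst j = x" and i1: "idx (real_of_rat b) \<le> i" and i2: "i < idx (real_of_rat c)"
        unfolding IZ_def by auto
      have "(fst (snd j) \<le> b \<and> snd (snd j) \<le> b) \<or> (c \<le> fst (snd j) \<and> c \<le> snd (snd j))"
        using jK fx by (simp add: KK_def)
      then show False
      proof
        assume "fst (snd j) \<le> b \<and> snd (snd j) \<le> b"
        then have "sj j \<le> real_of_rat b" "tj j \<le> real_of_rat b"
          unfolding sj_def tj_def by (simp_all add: of_rat_less_eq)
        then have "idx (sj j) \<le> idx (real_of_rat b)" "idx (tj j) \<le> idx (real_of_rat b)"
          using mono_idx[OF sT[OF j] bT] mono_idx[OF tT[OF j] bT] by auto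
        then show False using i i1 by auto
      next
        assume "c \<le> fst (snd j) \<and> c \<le> snd (snd j)"
        then have "real_of_rat c \<le> sj j" "real_of_rat c \<le> tj j"
          unfolding sj_def tj_def by (simp_all add: of_rat_less_eq)
        then have "idx (real_of_rat c) \<le> idx (sj j)" "idx (real_of_rat c) \<le> idx (tj j)"
          using mono_idx[OF cT sT[OF j]] mono_idx[OF cT tT[OF j]] by auto
        then show False using i i2 by auto
      qed
    qed
    then show ?thesis using y iN unfolding IV_def I_def by auto
  qed
  have memZ: "(x, i) \<in> IZ" if "i \<in> {idx (real_of_rat b)..<idx (real_of_rat c)}" for i
    using that unfolding IZ_def by auto
  have compV: "(\<lambda>u. u k) \<in> borel_measurable (PiM IV (\<lambda>_. borel))" if "k \<in> IV" for k
    using measurable_component_singleton[of k IV "\<lambda>_. borel"] that by simp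
  have compZ: "(\<lambda>u. u k) \<in> borel_measurable (PiM IZ (\<lambda>_. borel))" if "k \<in> IZ" for k
    using measurable_component_singleton[of k IZ "\<lambda>_. borel"] that by simp
  have Phi_meas: "Phi \<in> measurable (PiM IV (\<lambda>_. borel)) (PiM J (\<lambda>_. borel))"
    unfolding Phi_def
  proof (rule measurable_restrict)
    fix j assume j: "j \<in> J"
    show "(\<lambda>u::nat\<times>nat\<Rightarrow>real. (\<Sum>i\<in>{idx (sj j)..<idx (tj j)}. u (fst j, i)) - (\<Sum>i\<in>{idx (tj j)..<idx (sj j)}. u (fst j, i)))
          \<in> borel_measurable (PiM IV (\<lambda>_. borel))"
    proof (rule borel_measurable_diff)
      show "(\<lambda>u::nat\<times>nat\<Rightarrow>real. \<Sum>i\<in>{idx (sj j)..<idx (tj j)}. u (fst j, i)) \<in> borel_measurable (PiM IV (\<lambda>_. borel))"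
        by (rule borel_measurable_sum, rule compV, rule memV[OF j]) auto
      show "(\<lambda>u::nat\<times>nat\<Rightarrow>real. \<Sum>i\<in>{idx (tj j)..<idx (sj j)}. u (fst j, i)) \<in> borel_measurable (PiM IV (\<lambda>_. borel))"
        by (rule borel_measurable_sum, rule compV, rule memV[OF j]) auto
    qed
  qed
  have Psi_meas: "Psi \<in> borel_measurable (PiM IZ (\<lambda>_. borel))"
    unfolding Psi_def using memZ by (intro borel_measurable_sum compZ) auto
  have dval: "d (y, i) w = W y (ts (Suc i)) w - W y (ts i) w" for y i w unfolding d_def by simp
  have eqV: "Phi \<circ> (\<lambda>\<omega>. restrict (\<lambda>i. d i \<omega>) IV) = (\<lambda>w. \<lambda>k\<in>J. incr W k w)"
  proof (rule ext)
    fix w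
    show "(Phi \<circ> (\<lambda>\<omega>. restrict (\<lambda>i. d i \<omega>) IV)) w = (\<lambda>k\<in>J. incr W k w)"
    proof (rule ext)
      fix j
      show "(Phi \<circ> (\<lambda>\<omega>. restrict (\<lambda>i. d i \<omega>) IV)) w j = (\<lambda>k\<in>J. incr W k w) j"
      proof (cases "j \<in> J")
        case True
        have "(\<Sum>i\<in>{idx (sj j)..<idx (tj j)}. restrict (\<lambda>i. d i w) IV (fst j, i))
              = (\<Sum>i\<in>{idx (sj j)..<idx (tj j)}. W (fst j) (ts (Suc i)) w - W (fst j) (ts i) w)"
          using memV[OF True] by (intro sum.cong) (auto simp: dval)
        moreover have "(\<Sum>i\<in>{idx (tj j)..<idx (sj j)}. restrict (\<lambda>i. d i w) IV (fst j, i))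
              = (\<Sum>i\<in>{idx (tj j)..<idx (sj j)}. W (fst j) (ts (Suc i)) w - W (fst j) (ts i) w)"
          using memV[OF True] by (intro sum.cong) (auto simp: dval)
        ultimately have "(Phi \<circ> (\<lambda>\<omega>. restrict (\<lambda>i. d i \<omega>) IV)) w j
            = W (fst j) (ts (idx (tj j))) w - W (fst j) (ts (idx (sj j))) w"
          using True tele[of "\<lambda>i. W (fst j) (ts i) w" "idx (sj j)" "idx (tj j)"] by (simp add: Phi_def)
        also have "\<dots> = incr W j w" using idx(2)[OF sT[OF True]] idx(2)[OF tT[OF True]]
          by (simp add: incr_def sj_def tj_def)
        finally show ?thesis using True by simp
      next
        case False then show ?thesis by (simp add: Phi_def)
      qed
    qed
  qed
  have eqZ: "Psi \<circ> (\<lambda>\<omega>. restrict (\<lambda>i. d i \<omega>) IZ) = ZZ W x b c"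
  proof (rule ext)
    fix w
    have le: "idx (real_of_rat b) \<le> idx (real_of_rat c)" using mono_idx[OF bT cT] bc by (simp add: of_rat_less_eq)
    have "(Psi \<circ> (\<lambda>\<omega>. restrict (\<lambda>i. d i \<omega>) IZ)) w
          = (\<Sum>i\<in>{idx (real_of_rat b)..<idx (real_of_rat c)}. W x (ts (Suc i)) w - W x (ts i) w)"
      unfolding Psi_def using memZ by (auto intro!: sum.cong simp: dval)
    also have "\<dots> = W x (ts (idx (real_of_rat c))) w - W x (ts (idx (real_of_rat b))) w"
      using le by (rule sum_Suc_diff')
    also have "\<dots> = ZZ W x b c w" using idx(2)[OF bT] idx(2)[OF cT] by (simp add: ZZ_def)
    finally show "(Psi \<circ> (\<lambda>\<omega>. restrict (\<lambda>i. d i \<omega>) IZ)) w = ZZ W x b c w" .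
  qed
  show ?thesis
    using prod_from_indep[OF indr Phi_meas Psi_meas] unfolding eqV eqZ by blast
qed

lemma indep_set_mono2:
  assumes "indep_set A B" "A' \<subseteq> A" "B' \<subseteq> B"
  shows "indep_set A' B'"
  using assms unfolding indep_sets2_eq by blast

lemma indep_from_finite:
  fixes X :: "'k \<Rightarrow> 'a \<Rightarrow> real" and Z :: "'a \<Rightarrow> real" and G :: "('k \<Rightarrow> real) \<Rightarrow> real"
  assumes K: "K \<noteq> {}"
    and Zm: "Z \<in> borel_measurable M" and Xm: "\<And>k. k \<in> K \<Longrightarrow> X k \<in> borel_measurable M"
    and fin: "\<And>J. finite J \<Longrightarrow> J \<subseteq> K \<Longrightarrow> J \<noteq> {} \<Longrightarrow> \<forall>A\<in>sets borel. \<forall>B\<in>sets (PiM J (\<lambda>_. borel)).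
       prob ((\<lambda>w. \<lambda>k\<in>J. X k w) -` B \<inter> space M \<inter> (Z -` A \<inter> space M))
       = prob ((\<lambda>w. \<lambda>k\<in>J. X k w) -` B \<inter> space M) * prob (Z -` A \<inter> space M)"
    and Gm: "G \<in> borel_measurable (PiM K (\<lambda>_. borel))"
  shows "indep_var borel (\<lambda>w. G (\<lambda>k\<in>K. X k w)) borel Z"
proof -
  define V where "V w = (\<lambda>k\<in>K. X k w)" for w
  have Vm: "V \<in> measurable M (PiM K (\<lambda>_. borel))" unfolding V_def by (intro measurable_restrict Xm)
  have Ym: "(\<lambda>w. G (V w)) \<in> borel_measurable M" using measurable_compose[OF Vm Gm] .
  define GV where "GV = {V -` P \<inter> space M | P. P \<in> prod_algebra K (\<lambda>_. borel)}"
  define GZ where "GZ = {Z -` A \<inter> space M | A. A \<in> sets (borel :: real measure)}"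
  have PA: "prod_algebra K (\<lambda>_. borel) \<subseteq> sets (PiM K (\<lambda>_. (borel :: real measure)))"
    unfolding sets_PiM by auto
  have ind0: "indep_set GV GZ"
  proof (rule indep_setI)
    show "GV \<subseteq> events" unfolding GV_def using PA measurable_sets[OF Vm] by blast
    show "GZ \<subseteq> events" unfolding GZ_def using measurable_sets[OF Zm] by blast
    fix a b assume a: "a \<in> GV" and b: "b \<in> GZ"
    obtain P where aP: "a = V -` P \<inter> space M" and P: "P \<in> prod_algebra K (\<lambda>_. borel)"
      using a unfolding GV_def by blast
    obtain A where bA: "b = Z -` A \<inter> space M" and A: "A \<in> sets borel"
      using b unfolding GZ_def by blast
    obtain J E where PJ: "P = prod_emb K (\<lambda>_. borel) J (PiE J E)" and J: "finite J" "J \<noteq> {} \<or> K = {}" "J \<subseteq> K"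
      and E: "\<And>i. i \<in> J \<Longrightarrow> E i \<in> sets borel"
      using prod_algebraE[OF P] by metis
    have JK: "J \<noteq> {}" using J K by auto
    have a2: "a = (\<lambda>w. \<lambda>k\<in>J. X k w) -` (PiE J E) \<inter> space M"
    proof -
      have "V w \<in> P \<longleftrightarrow> (\<lambda>k\<in>J. X k w) \<in> PiE J E" for w
      proof -
        have "K \<inter> J = J" using J(3) by auto
        then have r: "restrict (V w) J = (\<lambda>k\<in>J. X k w)" unfolding V_def by simp
        have "V w \<in> (\<Pi>\<^sub>E i\<in>K. space borel)" unfolding V_def by auto
        then have "V w \<in> P \<longleftrightarrow> restrict (V w) J \<in> PiE J E"
          unfolding PJ prod_emb_def by blast
        then show ?thesis unfolding r .
      qed
      then show ?thesis unfolding aP by auto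
    qed
    have B: "PiE J E \<in> sets (PiM J (\<lambda>_. borel))" using J(1) E by (rule sets_PiM_I_finite)
    show "prob (a \<inter> b) = prob a * prob b"
      using fin[OF J(1) J(3) JK] A B unfolding a2 bA by blast
  qed
  have ind1: "indep_set (sigma_sets (space M) GV) (sigma_sets (space M) GZ)"
  proof (rule indep_set_sigma_sets[OF ind0])
    show "Int_stable GV" unfolding Int_stable_def GV_def
    proof safe
      fix P1 P2 :: "('k \<Rightarrow> real) set" assume "P1 \<in> prod_algebra K (\<lambda>_. borel)" "P2 \<in> prod_algebra K (\<lambda>_. borel)"
      then have "P1 \<inter> P2 \<in> prod_algebra K (\<lambda>_. borel)" using Int_stable_prod_algebra unfolding Int_stable_def by blast
      then show "\<exists>P. V -` P1 \<inter> space M \<inter> (V -` P2 \<inter> space M) = V -` P \<inter> space M \<and> P \<in> prod_algebra K (\<lambda>_. borel)"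
        by (intro exI[of _ "P1 \<inter> P2"]) auto
    qed
    show "Int_stable GZ" unfolding Int_stable_def GZ_def
    proof safe
      fix A1 A2 :: "real set" assume "A1 \<in> sets borel" "A2 \<in> sets borel"
      then show "\<exists>A. Z -` A1 \<inter> space M \<inter> (Z -` A2 \<inter> space M) = Z -` A \<inter> space M \<and> A \<in> sets borel"
        by (intro exI[of _ "A1 \<inter> A2"]) auto
    qed
  qed
  have sub1: "sigma_sets (space M) {(\<lambda>w. G (V w)) -` A \<inter> space M | A. A \<in> sets (borel :: real measure)} \<subseteq> sigma_sets (space M) GV"
  proof (rule sigma_sets_mono, safe)
    fix A :: "real set" assume A: "A \<in> sets borel"
    have GA: "G -` A \<inter> space (PiM K (\<lambda>_. borel)) \<in> sigma_sets (space (PiM K (\<lambda>_. (borel :: real measure)))) (prod_algebra K (\<lambda>_. borel))"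
      using measurable_sets[OF Gm A] unfolding sets_PiM space_PiM .
    have eq: "(\<lambda>w. G (V w)) -` A \<inter> space M = V -` (G -` A \<inter> space (PiM K (\<lambda>_. borel))) \<inter> space M"
      using measurable_space[OF Vm] by auto
    have "V -` (G -` A \<inter> space (PiM K (\<lambda>_. borel))) \<inter> space M \<in>
          {V -` P \<inter> space M | P. P \<in> sigma_sets (space (PiM K (\<lambda>_. (borel :: real measure)))) (prod_algebra K (\<lambda>_. borel))}"
      using GA by blast
    also have "\<dots> = sigma_sets (space M) GV"
      unfolding GV_def using measurable_space[OF Vm] by (intro sigma_sets_vimage_commute) auto
    finally show "(\<lambda>w. G (V w)) -` A \<inter> space M \<in> sigma_sets (space M) GV" unfolding eq .
  qed
  have "indep_set (sigma_sets (space M) {(\<lambda>w. G (V w)) -` A \<inter> space M | A. A \<in> sets (borel :: real measure)})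
                  (sigma_sets (space M) {Z -` A \<inter> space M | A. A \<in> sets (borel :: real measure)})"
    using indep_set_mono2[OF ind1 sub1] unfolding GZ_def by blast
  then show ?thesis unfolding indep_var_eq V_def[symmetric] using Ym Zm by simp
qed

lemma indep_eq_null:
  assumes ind: "indep_var borel Y borel Z" and Zd: "distributed M lborel Z f"
  shows "emeasure M {w\<in>space M. Y w = (Z w :: real)} = 0"
proof -
  have Ym: "Y \<in> borel_measurable M" using indep_var_rv1[OF ind] .
  have Zm: "Z \<in> borel_measurable M" using indep_var_rv2[OF ind] .
  define D where "D = {p \<in> space (borel \<Otimes>\<^sub>M borel). fst p = (snd p :: real)}"
  have Ds: "D \<in> sets (borel \<Otimes>\<^sub>M borel)" unfolding D_def by measurable
  have YZ: "(\<lambda>w. (Y w, Z w)) \<in> measurable M (borel \<Otimes>\<^sub>M borel)" using Ym Zm by (rule measurable_Pair)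
  have "emeasure M {w\<in>space M. Y w = Z w} = emeasure M ((\<lambda>w. (Y w, Z w)) -` D \<inter> space M)"
    by (rule arg_cong[where f="emeasure M"]) (auto simp: D_def space_pair_measure)
  also have "\<dots> = emeasure (distr M (borel \<Otimes>\<^sub>M borel) (\<lambda>w. (Y w, Z w))) D"
    using YZ Ds by (rule emeasure_distr[symmetric])
  also have "\<dots> = emeasure (distr M borel Y \<Otimes>\<^sub>M distr M borel Z) D"
    using ind unfolding indep_var_distribution_eq by simp
  also have "\<dots> = (\<integral>\<^sup>+y. emeasure (distr M borel Z) (Pair y -` D) \<partial>distr M borel Y)"
  proof -
    interpret PZ: prob_space "distr M borel Z" using Zm by (rule prob_space_distr)
    show ?thesis using Ds by (simp add: PZ.emeasure_pair_measure_alt)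
  qed
  also have "\<dots> = (\<integral>\<^sup>+y. 0 \<partial>distr M borel Y)"
  proof (rule nn_integral_cong)
    fix y :: real
    have P: "Pair y -` D = {y}" unfolding D_def by (auto simp: space_pair_measure)
    have "emeasure (distr M borel Z) {y} = emeasure M (Z -` {y} \<inter> space M)"
      using Zm by (intro emeasure_distr) auto
    also have "\<dots> = emeasure (distr M lborel Z) {y}"
      using Zm by (intro emeasure_distr[symmetric]) auto
    also have "\<dots> = emeasure (density lborel f) {y}"
      using Zd unfolding distributed_def by simp
    also have "\<dots> = (\<integral>\<^sup>+ x. f x * indicator {y} x \<partial>lborel)"
      using Zd unfolding distributed_def by (intro emeasure_density) auto
    also have "\<dots> = (\<integral>\<^sup>+ (x::real). 0 \<partial>lborel)"
    proof (rule nn_integral_cong_AE)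
      show "AE x in lborel. f x * indicator {y} x = 0"
        using AE_lborel_singleton[of y] by eventually_elim simp
    qed
    finally show "emeasure (distr M borel Z) (Pair y -` D) = 0" unfolding P by simp
  qed
  finally show ?thesis by simp
qed

lemma comp_KK:
  assumes "k \<in> KK L x b c"
  shows "(\<lambda>v. v k) \<in> borel_measurable (PiM (KK L x b c) (\<lambda>_. (borel :: real measure)))"
  using measurable_component_singleton[of k "KK L x b c" "\<lambda>_. (borel :: real measure)"] assms by simp

lemma E1_meas:
  assumes "(x, a, f x) \<in> KK L x b c"
  shows "(\<lambda>v. E1 L x a v f) \<in> borel_measurable (PiM (KK L x b c) (\<lambda>_. (borel :: real measure)))"
proof -
  have "(y, 0, f y) \<in> KK L x b c" if "y \<in> {1..L-1}-{x}" for y using that by (auto simp: KK_def)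
  then show ?thesis unfolding E1_def
    by (intro borel_measurable_diff borel_measurable_sum comp_KK assms measurable_const) auto
qed

lemma GG_meas:
  assumes x: "x \<in> {1..L-1}"
  shows "GG L x b c \<in> borel_measurable (PiM (KK L x b c) (\<lambda>_. (borel :: real measure)))"
proof -
  have cQ: "countable (QQ L)" unfolding QQ_def by (intro countable_PiE) auto
  have m1: "J1 L x b \<in> borel_measurable (PiM (KK L x b c) (\<lambda>_. (borel :: real measure)))"
    unfolding J1_def
  proof (rule borel_measurable_INF)
    show "countable {f \<in> QQ L. f x \<le> b}" using cQ by (rule countable_subset[rotated]) auto
    fix f assume f: "f \<in> {f \<in> QQ L. f x \<le> b}"
    then have "(x, b, f x) \<in> KK L x b c" using x by (auto simp: KK_def QQ_def)
    then show "(\<lambda>v. ereal (E1 L x b v f)) \<in> borel_measurable (PiM (KK L x b c) (\<lambda>_. borel))"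
      by (intro borel_measurable_ereal E1_meas)
  qed
  have m2: "J2 L x c \<in> borel_measurable (PiM (KK L x b c) (\<lambda>_. (borel :: real measure)))"
    unfolding J2_def
  proof (rule borel_measurable_INF)
    show "countable {f \<in> QQ L. c \<le> f x}" using cQ by (rule countable_subset[rotated]) auto
    fix f assume f: "f \<in> {f \<in> QQ L. c \<le> f x}"
    then have "(x, c, f x) \<in> KK L x b c" using x by (auto simp: KK_def QQ_def)
    then show "(\<lambda>v. ereal (E1 L x c v f)) \<in> borel_measurable (PiM (KK L x b c) (\<lambda>_. borel))"
      by (intro borel_measurable_ereal E1_meas)
  qed
  show ?thesis unfolding GG_def[abs_def]
    by (intro borel_measurable_diff borel_measurable_real_of_ereal m1 m2)
qed
end

context prob_space begin

lemma null_xbc: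
  assumes BM: "indep_two_sided_BMs M L W" and x: "x \<in> {1..L-1}" and bc: "b < c"
  shows "AE w in M. ZZ W x b c w \<noteq> GG L x b c (VV L W x b c w)"
proof -
  have KK: "KK L x b c \<noteq> {}" using x by (auto simp: KK_def intro!: exI[of _ "(x, b, b)"])
  have Xm: "incr W k \<in> borel_measurable M" if "k \<in> KK L x b c" for k
    using incr_meas[OF BM, of "fst k"] that unfolding incr_def[abs_def] by (auto simp: KK_def)
  have Zm: "ZZ W x b c \<in> borel_measurable M"
    using incr_meas[OF BM x] unfolding ZZ_def[abs_def] by auto
  have ind: "indep_var borel (\<lambda>w. GG L x b c (\<lambda>k\<in>KK L x b c. incr W k w)) borel (ZZ W x b c)"
  proof (rule indep_from_finite[OF KK Zm Xm _ GG_meas[OF x]])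
    fix J assume "finite J" "J \<subseteq> KK L x b c" "J \<noteq> {}"
    then show "\<forall>A\<in>sets borel. \<forall>B\<in>sets (PiM J (\<lambda>_. borel)).
       prob ((\<lambda>w. \<lambda>k\<in>J. incr W k w) -` B \<inter> space M \<inter> (ZZ W x b c -` A \<inter> space M))
       = prob ((\<lambda>w. \<lambda>k\<in>J. incr W k w) -` B \<inter> space M) * prob (ZZ W x b c -` A \<inter> space M)"
      using FG[OF BM x bc] by blast
  qed
  have "real_of_rat b < real_of_rat c" using bc by (simp add: of_rat_less)
  then obtain f where Zd: "distributed M lborel (ZZ W x b c) f"
    using dist_incr[OF BM x] unfolding ZZ_def[abs_def] by blast
  have N0: "emeasure M {w\<in>space M. GG L x b c (VV L W x b c w) = ZZ W x b c w} = 0"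
    using indep_eq_null[OF ind Zd] unfolding VV_def .
  have Ym: "(\<lambda>w. GG L x b c (VV L W x b c w)) \<in> borel_measurable M"
    using indep_var_rv1[OF ind] unfolding VV_def .
  have Ns: "{w\<in>space M. GG L x b c (VV L W x b c w) = ZZ W x b c w} \<in> sets M"
  proof -
    have "(\<lambda>w. GG L x b c (VV L W x b c w) - ZZ W x b c w) \<in> borel_measurable M"
      using Ym Zm by (rule borel_measurable_diff)
    then have "(\<lambda>w. GG L x b c (VV L W x b c w) - ZZ W x b c w) -` {0} \<inter> space M \<in> sets M"
      by (rule measurable_sets) simp
    moreover have "(\<lambda>w. GG L x b c (VV L W x b c w) - ZZ W x b c w) -` {0} \<inter> space M
       = {w\<in>space M. GG L x b c (VV L W x b c w) = ZZ W x b c w}" by auto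
    ultimately show ?thesis by simp
  qed
  show ?thesis
    by (subst AE_iff_measurable[OF Ns]) (use N0 in auto)
qed

lemma U:
  assumes BM: "indep_two_sided_BMs M L W"
  shows "AE w in M. \<forall>h g x. is_minimizer L W w 0 0 h \<longrightarrow> is_minimizer L W w 0 0 g \<longrightarrow>
                x \<in> {1..L-1} \<longrightarrow> h x \<le> g x"
proof -
  define S where "S = {1..L-1} \<times> {p :: rat \<times> rat. fst p < snd p}"
  have cU: "countable (UNIV :: (rat \<times> rat) set)" by simp
  have cS: "countable S" unfolding S_def
    by (rule countable_SIGMA) (auto intro: countable_subset[OF subset_UNIV cU])
  have A1: "AE w in M. \<forall>s\<in>S. ZZ W (fst s) (fst (snd s)) (snd (snd s)) w
              \<noteq> GG L (fst s) (fst (snd s)) (snd (snd s)) (VV L W (fst s) (fst (snd s)) (snd (snd s)) w)"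
  proof (subst AE_ball_countable[OF cS], intro ballI)
    fix s assume "s \<in> S"
    then have "fst s \<in> {1..L-1}" "fst (snd s) < snd (snd s)" unfolding S_def by auto
    then show "AE w in M. ZZ W (fst s) (fst (snd s)) (snd (snd s)) w
              \<noteq> GG L (fst s) (fst (snd s)) (snd (snd s)) (VV L W (fst s) (fst (snd s)) (snd (snd s)) w)"
      by (rule null_xbc[OF BM])
  qed
  have A2: "AE w in M. \<forall>x\<in>{1..L - 1}. W x 0 w = 0 \<and> continuous_on UNIV (\<lambda>t. W x t w)"
    using BM unfolding indep_two_sided_BMs_def by blast
  show ?thesis using A1 A2
  proof eventually_elim
    case (elim w)
    show ?case
    proof (intro allI impI)
      fix h g x assume hm: "is_minimizer L W w 0 0 h" and gm: "is_minimizer L W w 0 0 g" and x: "x \<in> {1..L-1}"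
      show "h x \<le> g x"
      proof (rule ccontr)
        assume "\<not> h x \<le> g x"
        then have "g x < h x" by simp
        then obtain b where b1: "g x < real_of_rat b" and b2: "real_of_rat b < h x" using of_rat_dense by blast
        then obtain c where c1: "real_of_rat b < real_of_rat c" and c2: "real_of_rat c < h x" using of_rat_dense by blast
        have bc: "b < c" using c1 by (simp add: of_rat_less)
        have W0: "\<forall>y\<in>{1..L-1}. W y 0 w = 0" and cont: "\<forall>y\<in>{1..L-1}. continuous_on UNIV (\<lambda>t. W y t w)"
          using elim(2) by auto
        have "ZZ W x b c w = GG L x b c (VV L W x b c w)"
          using b1 c2 by (intro det_core[OF W0 cont x gm hm]) auto
        moreover have "(x, b, c) \<in> S" using x bc by (simp add: S_def)
        ultimately show False using elim(1) by (metis fst_conv snd_conv)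
      qed
    qed
  qed
qed

end

theorem lemma6:
  fixes M :: "'a measure" and L :: nat and W :: "nat \<Rightarrow> real \<Rightarrow> 'a \<Rightarrow> real"
  assumes "prob_space M"
    and "L \<ge> 2" and "\<exists>k. L = 2 ^ k"
    and "indep_two_sided_BMs M L W"
  shows "AE w in M. \<forall>(h0::real) (h1::real) hstar h'.
           is_minimizer L W w 0 0 hstar \<longrightarrow> is_minimizer L W w h0 h1 h' \<longrightarrow>
             ((h0 \<ge> 0 \<and> h1 \<ge> 0 \<longrightarrow> (\<forall>x\<le>L. hstar x \<le> h' x)) \<and>
              (h0 \<le> 0 \<and> h1 \<le> 0 \<longrightarrow> (\<forall>x\<le>L. hstar x \<ge> h' x)))"
  by (rule main_from_U, rule prob_space.U[OF assms(1) assms(4)])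

end
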